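(* Let $d\ge1$ and $\beta>0$. There is a constant $c_1=c_1(d,\beta)>0$ such that, for all sufficiently small $\varepsilon\in(0,1)$ (depending only on $d,\beta$), with $K,N,M_i,r_i,A_i$ as in the context, $\mathbb{P}[A_i]\le c_1N^{-d}$ for all $i\in[1,K]_{\mathbb{Z}}$; consequently, with $A=\bigcup_{i=1}^K A_i$, $\mathbb{P}[A^c]\ge 1-c_1KN^{-d}$.
   Context: The $\beta$-LRP metric $D$ on $\mathbb{R}^d$ comes with a random set $\mathcal{E}$ of long edges $\langle\bm u,\bm v\rangle$, $\bm u,\bm v\in\mathbb{R}^d$, forming a Poisson point process with intensity $\beta|\bm u-\bm v|^{-2d}$: for disjoint Borel sets $U,W\subset\mathbb{R}^d$, the probability that there is at least one long edge with one endpoint in $U$ and the other in $W$ is $1-\exp\{-\int_U\int_W\beta|\bm u-\bm v|^{-2d}d\bm u\,d\bm v\}$, and edge configurations in disjoint regions of $\mathbb{R}^d\times\mathbb{R}^d$ are independent. $\theta\in(0,1)$ is the distance exponent of critical LRP (depending only on $d,\beta$). $B_r(\bm 0)$ is the Euclidean ball, $\mathbb{A}_{r,s}=B_r(\bm0)\setminus B_s(\bm 0)$, and $D(U,W;V)$ is the $D$-distance between $U,W$ for the metric restricted to $V$. Fix constants $c_{*,1},c_{*,2}>0$ depending only on $d,\beta$ with $\mathbb{P}[D(B_{1/2}(\bm0),\mathbb{A}_{1,7/8};B_1(\bm 0))\ge c_{*,1}]\ge c_{*,2}$. For $\varepsilon\in(0,1)$ set $K=\sqrt{\log(1/\varepsilon)}$,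 $N=(4^{-(1+1/\theta)}(c_{*,1}/\varepsilon)^{1/\theta})^{1/K}$, $M_1=(4\varepsilon/c_{*,1})^{1/\theta}$, $M_i=NM_{i-1}$ for $2\le i\le K$, $r_0=0$, $r_i=\sum_{k=1}^iM_k$. For $i\in[1,K]_{\mathbb{Z}}$, $A_i$ is the event that some long edge connects $B_{r_{i-1}}(\bm 0)$ and $B_{r_{i-1}+M_i/8}(\bm0)^c$. *)

theory Defs
  imports "HOL-Probability.Probability"
begin

definition lrp_intensity :: "real \<Rightarrow> ('a::euclidean_space) set \<Rightarrow> 'a set \<Rightarrow> ennreal" where
  "lrp_intensity \<beta> U W =
     (\<integral>\<^sup>+ u. \<integral>\<^sup>+ v. indicator U u * indicator W v *
          ennreal (\<beta> * norm (u - v) powr (- 2 * real DIM('a))) \<partial>lborel \<partial>lborel)"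

definition lrp_edge_prob :: "real \<Rightarrow> ('a::euclidean_space) set \<Rightarrow> 'a set \<Rightarrow> real" where
  "lrp_edge_prob \<beta> U W =
     (if lrp_intensity \<beta> U W = \<infinity> then 1 else 1 - exp (- enn2real (lrp_intensity \<beta> U W)))"

definition lrp_connect_event :: "'b measure \<Rightarrow> ('b \<Rightarrow> ('a \<times> 'a) set) \<Rightarrow> 'a set \<Rightarrow> 'a set \<Rightarrow> 'b set" where
  "lrp_connect_event M E U W =
     {\<omega> \<in> space M. \<exists>(u, v) \<in> E \<omega>. (u \<in> U \<and> v \<in> W) \<or> (v \<in> U \<and> u \<in> W)}"

text \<open>E is a random set of long edges of the beta-LRP: for disjoint Borel U, W the
  connection event is measurable with the Poisson probability.\<close>
definition lrp_edges :: "'b measure \<Rightarrow> real \<Rightarrow> ('b \<Rightarrow> ('a::euclidean_space \<times> 'a) set) \<Rightarrow> bool" where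
  "lrp_edges M \<beta> E \<longleftrightarrow>
     (\<forall>U W. U \<in> sets borel \<longrightarrow> W \<in> sets borel \<longrightarrow> U \<inter> W = {} \<longrightarrow>
        lrp_connect_event M E U W \<in> sets M \<and>
        measure M (lrp_connect_event M E U W) = lrp_edge_prob \<beta> U W)"

text \<open>Scale parameters (theta = distance exponent, cs = c_{*,1}).\<close>
definition scaleK :: "real \<Rightarrow> real" where
  "scaleK \<epsilon> = sqrt (ln (1 / \<epsilon>))"

definition scaleN :: "real \<Rightarrow> real \<Rightarrow> real \<Rightarrow> real" where
  "scaleN \<theta> cs \<epsilon> =
     (4 powr (- (1 + 1 / \<theta>)) * (cs / \<epsilon>) powr (1 / \<theta>)) powr (1 / scaleK \<epsilon>)"

definition scaleM :: "real \<Rightarrow> real \<Rightarrow> real \<Rightarrow> nat \<Rightarrow> real" where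
  "scaleM \<theta> cs \<epsilon> i = (4 * \<epsilon> / cs) powr (1 / \<theta>) * scaleN \<theta> cs \<epsilon> ^ (i - 1)"

definition scaler :: "real \<Rightarrow> real \<Rightarrow> real \<Rightarrow> nat \<Rightarrow> real" where
  "scaler \<theta> cs \<epsilon> i = (\<Sum>k = 1..i. scaleM \<theta> cs \<epsilon> k)"

definition eventA :: "'b measure \<Rightarrow> ('b \<Rightarrow> ('a::euclidean_space \<times> 'a) set) \<Rightarrow> real \<Rightarrow> real \<Rightarrow> real \<Rightarrow> nat \<Rightarrow> 'b set" where
  "eventA M E \<theta> cs \<epsilon> i =
     lrp_connect_event M E (ball 0 (scaler \<theta> cs \<epsilon> (i - 1)))
        (- ball 0 (scaler \<theta> cs \<epsilon> (i - 1) + scaleM \<theta> cs \<epsilon> i / 8))"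

end

theory Submission
  imports Defs
begin


lemma ball_vol:
  assumes "\<rho> \<ge> 0"
  shows "emeasure lborel (ball (0::'a::euclidean_space) \<rho>) \<le> ennreal ((2*\<rho>) ^ DIM('a))"
proof -
  have sub: "ball (0::'a) \<rho> \<subseteq> cbox (- \<rho> *\<^sub>R One) (\<rho> *\<^sub>R One)"
  proof
    fix x :: 'a assume "x \<in> ball 0 \<rho>"
    then have "norm x < \<rho>" by simp
    then have "\<bar>x \<bullet> b\<bar> \<le> \<rho>" if "b \<in> Basis" for b
      using Basis_le_norm[OF that, of x] by linarith
    then show "x \<in> cbox (- \<rho> *\<^sub>R One) (\<rho> *\<^sub>R One)"
      by (force simp: cbox_def abs_le_iff)
  qed
  have "emeasure lborel (ball (0::'a) \<rho>) \<le> emeasure lborel (cbox (- \<rho> *\<^sub>R One) (\<rho> *\<^sub>R One) :: 'a set)"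
    by (rule emeasure_mono[OF sub]) simp
  also have "\<dots> = ennreal (\<Prod>b\<in>(Basis::'a set). 2*\<rho>)"
    using assms by (subst emeasure_lborel_cbox) (auto intro!: prod.cong arg_cong[where f=ennreal] simp: inner_add_left)
  also have "\<dots> = ennreal ((2*\<rho>) ^ DIM('a))" by (simp add: prod_constant)
  finally show ?thesis .
qed

lemma dyadic:
  fixes R t :: real
  assumes "R > 0" "t \<ge> R"
  shows "\<exists>k::nat. 2^k * R \<le> t \<and> t < 2^(Suc k) * R"
proof -
  obtain n :: nat where n: "t / R < 2 ^ n" using real_arch_pow[of 2 "t/R"] by auto
  then have ex: "\<exists>n::nat. t < 2^n * R" using assms by (auto simp: field_simps)
  define m where "m = (LEAST n::nat. t < 2^n * R)"
  have m: "t < 2^m * R" unfolding m_def by (rule LeastI_ex[OF ex])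
  have "m \<noteq> 0" using m assms by (cases "m = 0") auto
  then obtain k where k: "m = Suc k" by (cases m) auto
  have "\<not> t < 2^k * R" using not_less_Least[of k "\<lambda>n. t < 2^n * R"] k m_def by simp
  then show ?thesis using m k by (intro exI[of _ k]) auto
qed

lemma term_bound:
  fixes R :: real and d :: nat
  assumes "R > 0" "d \<ge> 1"
  shows "(2^k*R) powr (-2*real d) * (2*(2^Suc k*R))^d \<le> 4^d * R powr (-real d) * (1/2)^k"
proof -
  define x where "x = 2^k*R"
  have x: "x > 0" using assms by (simp add: x_def)
  have e1: "2*(2^Suc k*R) = 4 * x" by (simp add: x_def)
  have e2: "(4 * x)^d = 4^d * x powr real d" using x by (simp add: powr_realpow power_mult_distrib)
  have e3: "x powr (-2*real d) * x powr real d = x powr (- real d)" using x by (simp add: powr_add[symmetric])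
  have e4: "x powr (- real d) = (2^k) powr (- real d) * R powr (- real d)"
    using assms unfolding x_def by (simp add: powr_mult)
  have i5: "(2^k::real) powr (- real d) \<le> (2^k) powr (-1)"
    using assms by (intro powr_mono) auto
  have e6: "(2^k::real) powr (-1) = (1/2)^k" by (simp add: powr_minus power_one_over inverse_eq_divide)
  have "(2^k*R) powr (-2*real d) * (2*(2^Suc k*R))^d = 4^d * (x powr (-2*real d) * x powr real d)"
    unfolding e1 e2 x_def[symmetric] by simp
  also have "\<dots> = 4^d * ((2^k) powr (- real d) * R powr (- real d))" unfolding e3 e4 ..
  also have "\<dots> \<le> 4^d * ((1/2)^k * R powr (- real d))"
    using i5 e6 by (intro mult_left_mono mult_right_mono) auto
  finally show ?thesis by (simp only: ac_simps)
qed

lemma tail: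
  fixes R :: real
  assumes "R > 0"
  shows "(\<integral>\<^sup>+ v. indicator (- ball (0::'a::euclidean_space) R) v * ennreal (norm v powr (- 2 * real DIM('a))) \<partial>lborel)
     \<le> ennreal (4^DIM('a) * R powr (- real DIM('a)) * 2)"
proof -
  define D where "D = real DIM('a)"
  define g where "g k v = indicator (ball (0::'a) (2^Suc k * R)) v * ennreal ((2^k*R) powr (-2*D))" for k v
  have pw: "indicator (- ball (0::'a) R) v * ennreal (norm v powr (- 2 * real DIM('a))) \<le> (\<Sum>k. g k v)" for v
  proof (cases "norm v \<ge> R")
    case True
    then obtain k :: nat where k: "2^k * R \<le> norm v" "norm v < 2^(Suc k) * R"
      using dyadic[OF assms] by blast
    have "norm v powr (- 2 * real DIM('a)) \<le> (2^k*R) powr (-2*D)"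
      unfolding D_def using k assms by (intro powr_mono2') auto
    then have "indicator (- ball (0::'a) R) v * ennreal (norm v powr (- 2 * real DIM('a))) \<le> g k v"
      using k True by (auto simp: g_def indicator_def dist_norm intro: ennreal_leI)
    also have "g k v \<le> (\<Sum>i<Suc k. g i v)" by (simp)
    also have "\<dots> \<le> (\<Sum>k. g k v)" by (rule sum_le_suminf) auto
    finally show ?thesis .
  next
    case False then show ?thesis by (auto simp: indicator_def dist_norm)
  qed
  have "(\<integral>\<^sup>+ v. indicator (- ball (0::'a::euclidean_space) R) v * ennreal (norm v powr (- 2 * real DIM('a))) \<partial>lborel)
      \<le> (\<integral>\<^sup>+ v. (\<Sum>k. g k v) \<partial>lborel)"
    by (rule nn_integral_mono) (rule pw)
  also have "\<dots> = (\<Sum>k. integral\<^sup>N lborel (g k))"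
    by (rule nn_integral_suminf) (unfold g_def, measurable, auto simp: pred_def)
  also have "\<dots> \<le> (\<Sum>k. ennreal (4^DIM('a) * R powr (- real DIM('a)) * (1/2)^k))"
  proof (rule suminf_le)
    fix k
    have "integral\<^sup>N lborel (g k) = ennreal ((2^k*R) powr (-2*D)) * emeasure lborel (ball (0::'a) (2^Suc k * R))"
      unfolding g_def by (subst mult.commute) (simp add: nn_integral_cmult_indicator)
    also have "\<dots> \<le> ennreal ((2^k*R) powr (-2*D)) * ennreal ((2*(2^Suc k*R))^DIM('a))"
      using assms by (intro mult_left_mono ball_vol) auto
    also have "\<dots> = ennreal ((2^k*R) powr (-2*D) * (2*(2^Suc k*R))^DIM('a))"
      by (simp add: ennreal_mult')
    also have "\<dots> \<le> ennreal (4^DIM('a) * R powr (- real DIM('a)) * (1/2)^k)"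
      unfolding D_def using assms by (intro ennreal_leI term_bound) (auto simp: DIM_positive Suc_le_eq)
    finally show "integral\<^sup>N lborel (g k) \<le> ennreal (4^DIM('a) * R powr (- real DIM('a)) * (1/2)^k)" .
  qed auto
  also have "\<dots> = ennreal (4^DIM('a) * R powr (- real DIM('a)) * 2)"
  proof (rule suminf_ennreal_eq)
    show "(\<lambda>k. 4^DIM('a) * R powr (- real DIM('a)) * (1/2)^k) sums (4^DIM('a) * R powr (- real DIM('a)) * 2)"
      using sums_mult[OF geometric_sums[of "1/2::real"], of "4^DIM('a) * R powr (- real DIM('a))"] by simp
  qed simp
  finally show ?thesis .
qed


lemma real_pw:
  fixes u v :: "'a::euclidean_space" and r s D :: real
  assumes "r \<ge> 0" "s > 0" "D \<ge> 0" "norm u < r" "norm v \<ge> r + s"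
  shows "norm (u - v) powr (- 2 * D) \<le> ((r+s)/s) powr (2*D) * norm v powr (- 2 * D)"
proof -
  define a where "a = norm v * (s/(r+s))"
  have "norm v > 0" using assms by linarith
  then have a: "a > 0" using assms by (simp add: a_def)
  have "(norm v - r)*(r+s) - norm v * s = r*(norm v - (r+s))" by (simp add: algebra_simps)
  also have "\<dots> \<ge> 0" using assms by simp
  finally have "(norm v - r)*(r+s) \<ge> norm v * s" by simp
  then have "norm v - r \<ge> a" using assms by (simp add: a_def field_simps)
  moreover have "norm (u - v) \<ge> norm v - norm u" by (metis norm_minus_commute norm_triangle_ineq2)
  ultimately have "a \<le> norm (u - v)" using assms by linarith
  then have "norm (u - v) powr (- 2 * D) \<le> a powr (- 2 * D)"
    using a assms by (intro powr_mono2') auto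
  also have "a powr (- 2 * D) = norm v powr (- 2 * D) * (s/(r+s)) powr (- 2 * D)"
    unfolding a_def using assms by (intro powr_mult)
  also have "(s/(r+s)) powr (- 2 * D) = ((r+s)/s) powr (2*D)"
    using assms by (simp add: powr_minus_divide powr_divide)
  finally show ?thesis by (simp add: mult.commute)
qed


lemma intensity_bound:
  fixes r s \<beta> :: real
  assumes "\<beta> > 0" "r \<ge> 0" "s > 0"
  shows "lrp_intensity \<beta> (ball (0::'a::euclidean_space) r) (- ball 0 (r+s))
     \<le> ennreal ((\<beta> * ((r+s)/s) powr (2*real DIM('a)) * (4^DIM('a) * (r+s) powr (- real DIM('a)) * 2)) * (2*r)^DIM('a))"
proof -
  define D where "D = real DIM('a)"
  define U where "U = ball (0::'a) r"
  define W where "W = - ball (0::'a) (r+s)"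
  define C where "C = \<beta> * ((r+s)/s) powr (2*D)"
  define T where "T = 4^DIM('a) * (r+s) powr (- D) * 2"
  have C: "C \<ge> 0" using assms by (simp add: C_def)
  have T: "T \<ge> 0" by (simp add: T_def)
  have pw: "indicator U u * indicator W v * ennreal (\<beta> * norm (u - v) powr (- 2 * D))
      \<le> ennreal (indicator U u * C) * (indicator W v * ennreal (norm v powr (- 2 * D)))" for u v
  proof (cases "u \<in> U \<and> v \<in> W")
    case True
    then have "norm u < r" "norm v \<ge> r + s" by (auto simp: U_def W_def)
    then have "\<beta> * norm (u - v) powr (- 2 * D) \<le> \<beta> * (((r+s)/s) powr (2*D) * norm v powr (- 2 * D))"
      using assms by (intro mult_left_mono real_pw) (auto simp: D_def)
    then have "ennreal (\<beta> * norm (u - v) powr (- 2 * D)) \<le> ennreal (C * norm v powr (- 2 * D))"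
      by (intro ennreal_leI) (simp add: C_def mult.assoc)
    then show ?thesis using True C by (simp add: ennreal_mult)
  next
    case False then show ?thesis by (auto simp: indicator_def)
  qed
  have inner: "(\<integral>\<^sup>+ v. indicator U u * indicator W v * ennreal (\<beta> * norm (u - v) powr (- 2 * D)) \<partial>lborel)
      \<le> ennreal (indicator U u * C) * ennreal T" for u
  proof -
    have "(\<integral>\<^sup>+ v. indicator U u * indicator W v * ennreal (\<beta> * norm (u - v) powr (- 2 * D)) \<partial>lborel)
      \<le> (\<integral>\<^sup>+ v. ennreal (indicator U u * C) * (indicator W v * ennreal (norm v powr (- 2 * D))) \<partial>lborel)"
      by (rule nn_integral_mono) (rule pw)
    also have "\<dots> = ennreal (indicator U u * C) * (\<integral>\<^sup>+ v. indicator W v * ennreal (norm v powr (- 2 * D)) \<partial>lborel)"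
      by (rule nn_integral_cmult) (unfold W_def, measurable, auto simp: pred_def)
    also have "\<dots> \<le> ennreal (indicator U u * C) * ennreal T"
      unfolding W_def T_def D_def using assms by (intro mult_left_mono tail) auto
    finally show ?thesis .
  qed
  have "lrp_intensity \<beta> U W \<le> (\<integral>\<^sup>+ u. ennreal (indicator U u * C) * ennreal T \<partial>lborel)"
    unfolding lrp_intensity_def D_def[symmetric] by (rule nn_integral_mono) (rule inner)
  also have "\<dots> = (\<integral>\<^sup>+ u. ennreal (C * T) * indicator U u \<partial>lborel)"
    using C T by (intro nn_integral_cong) (auto simp: indicator_def ennreal_mult[symmetric])
  also have "\<dots> = ennreal (C * T) * emeasure lborel U"
    by (rule nn_integral_cmult_indicator) (simp add: U_def)
  also have "\<dots> \<le> ennreal (C * T) * ennreal ((2*r)^DIM('a))"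
    unfolding U_def using assms by (intro mult_left_mono ball_vol) auto
  also have "\<dots> = ennreal ((C * T) * (2*r)^DIM('a))"
    using C T assms by (simp add: ennreal_mult)
  finally show ?thesis by (simp add: U_def W_def C_def T_def D_def)
qed


lemma geom_bound:
  fixes N :: real
  assumes "N \<ge> 2"
  shows "(\<Sum>k=1..n. N^(k-1)) * N \<le> 2 * N^n"
proof (induction n)
  case 0 then show ?case by simp
next
  case (Suc n)
  have "(\<Sum>k=1..Suc n. N^(k-1)) * N = (\<Sum>k=1..n. N^(k-1)) * N + N^n * N" by (simp add: algebra_simps)
  also have "\<dots> \<le> 2 * N^n + N^n * N" using Suc by simp
  also have "0 \<le> N^n" using assms by simp
  then have "2 * N^n \<le> N * N^n" using mult_right_mono[OF assms] by blast
  then have "2 * N^n \<le> N^n * N" by (simp add: mult.commute)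
  then have "2 * N^n + N^n * N \<le> 2 * N^Suc n" by (simp add: algebra_simps)
  finally show ?case .
qed

lemma final_arith:
  fixes \<beta> M N r :: real and d :: nat
  assumes "\<beta> > 0" "M > 0" "N \<ge> 2" "r \<ge> 0" "r * N \<le> 2 * M"
  shows "(\<beta> * ((r+M/8)/(M/8)) powr (2*real d) * (4^d * (r+M/8) powr (- real d) * 2)) * (2*r)^d
    \<le> (\<beta> * 9 powr (2*real d) * 4^d * 2 * 32 powr real d) * N powr (- real d)"
proof -
  define s where "s = M/8"
  define D where "D = real d"
  have s: "s > 0" using assms by (simp add: s_def)
  have rM: "r \<le> M" using assms
    by (metis (no_types, opaque_lifting) le_divide_eq_numeral1(1) linorder_not_le mult_le_cancel_left_pos
        mult_right_mono order.trans zero_less_numeral mult.commute order_less_le_trans)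
  have h1: "((r+s)/s) powr (2*D) \<le> 9 powr (2*D)"
    using rM s assms(4) by (intro powr_mono2) (auto simp: D_def s_def field_simps)
  have h2: "(r+s) powr (- D) \<le> s powr (- D)"
    using s assms by (intro powr_mono2') (auto simp: D_def)
  have "2*r \<le> 4*M/N" using assms by (simp add: field_simps)
  then have h3: "(2*r)^d \<le> (4*M/N)^d" using assms by (intro power_mono) auto
  have e4: "s powr (-D) * (4*M/N)^d = 32 powr D * N powr (-D)"
  proof -
    have "(4*M/N)^d = (4*M/N) powr D" using assms by (simp add: D_def powr_realpow)
    moreover have "s powr (-D) = (8/M) powr D" using assms by (simp add: s_def powr_minus_divide powr_divide)
    moreover have "(8/M) powr D * (4*M/N) powr D = (8/M * (4*M/N)) powr D"
      using assms by (intro powr_mult[symmetric])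
    ultimately have "s powr (-D) * (4*M/N)^d = (8/M * (4*M/N)) powr D" by simp
    also have "8/M * (4*M/N) = 32 / N" using assms by (simp add: field_simps)
    also have "(32 / N) powr D = 32 powr D * N powr (-D)" using assms
      by (simp add: powr_divide powr_minus_divide)
    finally show ?thesis .
  qed
  have "(\<beta> * ((r+s)/s) powr (2*D) * (4^d * (r+s) powr (- D) * 2)) * (2*r)^d
      \<le> (\<beta> * 9 powr (2*D) * (4^d * s powr (- D) * 2)) * (4*M/N)^d"
    using h1 h2 h3 assms by (intro mult_mono) auto
  also have "\<dots> = (\<beta> * 9 powr (2*D) * 4^d * 2) * (s powr (-D) * (4*M/N)^d)" by (simp add: ac_simps)
  also have "\<dots> = (\<beta> * 9 powr (2*D) * 4^d * 2 * 32 powr D) * N powr (-D)" unfolding e4 by (simp add: ac_simps)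
  finally show ?thesis by (simp add: s_def D_def)
qed


lemma prob_le:
  assumes "lrp_intensity \<beta> U W \<le> ennreal B" "B \<ge> 0"
  shows "lrp_edge_prob \<beta> U W \<le> B"
proof -
  have ni: "lrp_intensity \<beta> U W \<noteq> \<infinity>" using assms(1) by (metis ennreal_neq_top infinity_ennreal_def neq_top_trans)
  define x where "x = enn2real (lrp_intensity \<beta> U W)"
  have x: "x \<le> B" unfolding x_def using assms by (intro enn2real_leI)
  have "1 + (- x) \<le> exp (- x)" by (rule exp_ge_add_one_self)
  then have "1 - exp (- x) \<le> x" by simp
  then show ?thesis using ni x unfolding lrp_edge_prob_def x_def by simp
qed

lemma per_i:
  fixes \<beta> \<theta> cs \<epsilon> :: real and i :: nat and M :: "'b measure" and E :: "'b \<Rightarrow> ('a::euclidean_space \<times> 'a) set"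
  assumes "\<beta> > 0" "cs > 0" "\<epsilon> > 0" "i \<ge> 1" "prob_space M" "lrp_edges M \<beta> E"
    and c1: "c1 \<ge> \<beta> * 9 powr (2*real DIM('a)) * 4^DIM('a) * 2 * 32 powr real DIM('a)"
    "c1 \<ge> 2 powr real DIM('a)"
  shows "eventA M E \<theta> cs \<epsilon> i \<in> sets M \<and>
     measure M (eventA M E \<theta> cs \<epsilon> i) \<le> c1 * scaleN \<theta> cs \<epsilon> powr (- real DIM('a))"
proof -
  define N where "N = scaleN \<theta> cs \<epsilon>"
  define a where "a = (4 * \<epsilon> / cs) powr (1 / \<theta>)"
  define r where "r = scaler \<theta> cs \<epsilon> (i - 1)"
  define m where "m = scaleM \<theta> cs \<epsilon> i"
  define D where "D = real DIM('a)"
  have "(0::real) < 2 powr real DIM('a)" by simp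
  then have c1pos: "c1 > 0" using c1(2) by linarith
  have a: "a > 0" using assms by (simp add: a_def)
  have N: "N > 0" unfolding N_def scaleN_def using assms by simp
  have m_eq: "m = a * N^(i-1)" by (simp add: m_def scaleM_def a_def N_def)
  have m: "m > 0" using a N m_eq by simp
  have r_eq: "r = a * (\<Sum>k=1..i-1. N^(k-1))"
    by (simp add: r_def scaler_def scaleM_def a_def N_def sum_distrib_left)
  have r: "r \<ge> 0" using a N r_eq by (simp add: sum_nonneg)
  define U where "U = ball (0::'a) r"
  define W where "W = - ball (0::'a) (r + m/8)"
  have ev: "eventA M E \<theta> cs \<epsilon> i = lrp_connect_event M E U W"
    by (simp add: eventA_def U_def W_def r_def m_def)
  have UW: "U \<in> sets borel" "W \<in> sets borel" "U \<inter> W = {}" using m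
    by (auto simp: U_def W_def)
  then have meas: "lrp_connect_event M E U W \<in> sets M" and pr: "measure M (lrp_connect_event M E U W) = lrp_edge_prob \<beta> U W"
    using assms(6) unfolding lrp_edges_def by blast+
  have "measure M (lrp_connect_event M E U W) \<le> c1 * N powr (- D)"
  proof (cases "N \<ge> 2")
    case True
    have "r * N \<le> 2 * m"
      using geom_bound[OF True, of "i-1"] a unfolding r_eq m_eq
      by (metis (no_types, lifting) mult.assoc mult.left_commute mult_left_mono less_imp_le)
    then have B: "(\<beta> * ((r+m/8)/(m/8)) powr (2*D) * (4^DIM('a) * (r+m/8) powr (- D) * 2)) * (2*r)^DIM('a)
       \<le> (\<beta> * 9 powr (2*D) * 4^DIM('a) * 2 * 32 powr D) * N powr (- D)"
      unfolding D_def using final_arith[OF assms(1) m True r] by blast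
    have "lrp_intensity \<beta> U W \<le> ennreal ((\<beta> * ((r+m/8)/(m/8)) powr (2*D) * (4^DIM('a) * (r+m/8) powr (- D) * 2)) * (2*r)^DIM('a))"
      unfolding U_def W_def D_def using intensity_bound[OF assms(1) r, of "m/8"] m by simp
    also have "\<dots> \<le> ennreal (c1 * N powr (- D))"
      using B c1 by (intro ennreal_leI order.trans[OF B] mult_right_mono) (auto simp: D_def)
    finally have "lrp_edge_prob \<beta> U W \<le> c1 * N powr (- D)"
      using c1pos N by (intro prob_le) auto
    then show ?thesis using pr by simp
  next
    case False
    have "2 powr (- D) \<le> N powr (- D)" using N False by (intro powr_mono2') (auto simp: D_def)
    then have "2 powr D * 2 powr (- D) \<le> c1 * N powr (- D)"
      using c1 c1pos by (intro mult_mono) (auto simp: D_def)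
    moreover have "2 powr D * 2 powr (- D) = (1::real)" by (simp add: powr_add[symmetric])
    moreover have "measure M (lrp_connect_event M E U W) \<le> 1"
      using assms(5) by (simp add: prob_space.prob_le_1)
    ultimately show ?thesis by linarith
  qed
  then show ?thesis using meas ev by (simp add: N_def D_def)
qed


theorem lemma3p2:
  fixes \<beta> \<theta> cs :: real
  assumes "\<beta> > 0" and "0 < \<theta>" and "\<theta> < 1" and "cs > 0"
  shows "\<exists>c1 > 0. \<exists>\<epsilon>0 > 0. \<forall>\<epsilon>. 0 < \<epsilon> \<and> \<epsilon> < 1 \<and> \<epsilon> < \<epsilon>0 \<longrightarrow>
           (\<forall>(M :: 'b measure) (E :: 'b \<Rightarrow> ('a::euclidean_space \<times> 'a) set).
              prob_space M \<and> lrp_edges M \<beta> E \<longrightarrow>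
                (\<forall>i \<in> {1..nat \<lfloor>scaleK \<epsilon>\<rfloor>}.
                   measure M (eventA M E \<theta> cs \<epsilon> i)
                     \<le> c1 * scaleN \<theta> cs \<epsilon> powr (- real DIM('a))) \<and>
                measure M (space M - (\<Union>i \<in> {1..nat \<lfloor>scaleK \<epsilon>\<rfloor>}. eventA M E \<theta> cs \<epsilon> i))
                  \<ge> 1 - c1 * scaleK \<epsilon> * scaleN \<theta> cs \<epsilon> powr (- real DIM('a)))"
proof -
  define c1 where "c1 = max (\<beta> * 9 powr (2*real DIM('a)) * 4^DIM('a) * 2 * 32 powr real DIM('a)) (2 powr real DIM('a))"
  have c1a: "c1 \<ge> \<beta> * 9 powr (2*real DIM('a)) * 4^DIM('a) * 2 * 32 powr real DIM('a)"
    and c1b: "c1 \<ge> 2 powr real DIM('a)" by (simp_all add: c1_def)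
  have "(0::real) < 2 powr real DIM('a)" by simp
  then have c1pos: "c1 > 0" using c1b by linarith
  have main: "(\<forall>i \<in> {1..nat \<lfloor>scaleK \<epsilon>\<rfloor>}.
                   measure M (eventA M E \<theta> cs \<epsilon> i)
                     \<le> c1 * scaleN \<theta> cs \<epsilon> powr (- real DIM('a))) \<and>
                measure M (space M - (\<Union>i \<in> {1..nat \<lfloor>scaleK \<epsilon>\<rfloor>}. eventA M E \<theta> cs \<epsilon> i))
                  \<ge> 1 - c1 * scaleK \<epsilon> * scaleN \<theta> cs \<epsilon> powr (- real DIM('a))"
    if eps: "0 < \<epsilon>" "\<epsilon> < 1" and PM: "prob_space M" and LE: "lrp_edges M \<beta> E"
    for \<epsilon> and M :: "'b measure" and E :: "'b \<Rightarrow> ('a \<times> 'a) set"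
  proof -
    define I where "I = {1..nat \<lfloor>scaleK \<epsilon>\<rfloor>}"
    define q where "q = c1 * scaleN \<theta> cs \<epsilon> powr (- real DIM('a))"
    have q: "q \<ge> 0" using c1pos by (simp add: q_def)
    have pi: "eventA M E \<theta> cs \<epsilon> i \<in> sets M \<and> measure M (eventA M E \<theta> cs \<epsilon> i) \<le> q" if "i \<in> I" for i
      unfolding q_def using per_i[OF assms(1) assms(4) eps(1) _ PM LE c1a c1b, of i \<theta>] that by (simp add: I_def)
    have "ln (1/\<epsilon>) \<ge> 0" using eps by (simp add: field_simps)
    then have K: "scaleK \<epsilon> \<ge> 0" by (simp add: scaleK_def)
    have "measure M (\<Union>i\<in>I. eventA M E \<theta> cs \<epsilon> i) \<le> (\<Sum>i\<in>I. measure M (eventA M E \<theta> cs \<epsilon> i))"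
      using pi by (intro measure_UNION_le) (auto simp: I_def)
    also have "\<dots> \<le> (\<Sum>i\<in>I. q)" using pi by (intro sum_mono) auto
    also have "\<dots> = real (nat \<lfloor>scaleK \<epsilon>\<rfloor>) * q" by (simp add: I_def)
    also have "\<dots> \<le> scaleK \<epsilon> * q" using K q by (intro mult_right_mono) auto
    finally have U: "measure M (\<Union>i\<in>I. eventA M E \<theta> cs \<epsilon> i) \<le> scaleK \<epsilon> * q" .
    have "(\<Union>i\<in>I. eventA M E \<theta> cs \<epsilon> i) \<in> sets M" using pi by (auto simp: I_def)
    then have "measure M (space M - (\<Union>i\<in>I. eventA M E \<theta> cs \<epsilon> i)) = 1 - measure M (\<Union>i\<in>I. eventA M E \<theta> cs \<epsilon> i)"
      using PM by (simp add: prob_space.prob_compl)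
    moreover have "scaleK \<epsilon> * q = c1 * scaleK \<epsilon> * scaleN \<theta> cs \<epsilon> powr (- real DIM('a))"
      by (simp add: q_def)
    ultimately have "measure M (space M - (\<Union>i\<in>I. eventA M E \<theta> cs \<epsilon> i))
        \<ge> 1 - c1 * scaleK \<epsilon> * scaleN \<theta> cs \<epsilon> powr (- real DIM('a))" using U by linarith
    moreover have "\<forall>i\<in>I. measure M (eventA M E \<theta> cs \<epsilon> i) \<le> c1 * scaleN \<theta> cs \<epsilon> powr (- real DIM('a))"
      using pi unfolding q_def by blast
    ultimately show ?thesis unfolding I_def by blast
  qed
  show ?thesis
    by (rule exI[of _ c1], rule conjI[OF c1pos], rule exI[of _ 1]) (use main in auto)
qed

end
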